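(* Let $C^*\ge10^6$ be the fixed constant of the context and let $\mathbf{A}\in[-1,1]^{m\times n}$ with $n\ge C^*\cdot m$. With probability at least $0.99$ over its random bits $\mathbf{r}$, the procedure $\textsc{ColumnReductionSampling}$ described in the context does not return $\bot$ and returns $\mathbf{x}_T\in[-1,1]^n$ with $|\{i\in[n]:|\mathbf{x}_T(i)|=1\}|=0.9n$ and $\|\mathbf{A}\mathbf{x}_T\|_\infty=0$. Moreover, for different random seeds $\mathbf{r}\neq\mathbf{r}'$, the outputs $\mathbf{x}_T$ and $\mathbf{x}'_T$ of the procedure on $\mathbf{r}$ and $\mathbf{r}'$ differ on some entry $i$ at which both lie in $\{\pm1\}$.
   Context: Leverage scores: for a linear subspace $H\subseteq\mathbb{R}^S$ and $i\in S$, $\tau_i(H)=\max_{\mathbf{u}\in H\setminus\{0\}}\mathbf{u}(i)^2/\|\mathbf{u}\|_2^2$. If $\psi_1,\dots,\psi_d$ is an orthonormal basis of $H$, then $\tau_i(H)=\sum_j\psi_j(i)^2$ and $\textsc{FindVector}(H,i)$ returns $\mathbf{u}=(\sum_j\psi_j(i)\psi_j)/(\sum_j\psi_j(i)^2)$, the vector of $H$ with $\mathbf{u}(i)=1$ and $\|\mathbf{u}\|_2^2=1/\tau_i(H)$. For $\mathbf{v}\in\mathbb{R}^n$ and $S\subseteq[n]$, $\mathbf{v}(S)$ is its restriction to $S$; vectors in $\mathbb{R}^S$ are extended by zero to $\mathbb{R}^n$. Procedure $\textsc{ColumnReductionSampling}$ with parameters $\eta=0.1$, $T=0.9n$, $\gamma=0.0001$,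 $\delta=0.05$: set $\mathbf{x}_0=\vec 0$. For $t=0,\dots,T-1$: let $\mathcal{F}_t=\{i:|\mathbf{x}_t(i)|=1\}$, $\mathcal{D}_t=\{i:|\mathbf{x}_t(i)|\ge1-\eta\}$; let $H_t$ be the subspace of $\mathbb{R}^{[n]\setminus\mathcal{D}_t}$ orthogonal to $\mathbf{x}_t([n]\setminus\mathcal{D}_t)$ and to every $\mathbf{A}(j,[n]\setminus\mathcal{D}_t)$, $j\in[m]$; find the first coordinate $k_t\notin\mathcal{D}_t$ with $\tau_{k_t}(H_t)\ge1-\gamma$ and $|\mathbf{x}_t(k_t)|\le\delta$ (return $\bot$ if none exists); let $\mathbf{u}_t=\textsc{FindVector}(H_t,k_t)$; with $\delta_t=\mathbf{x}_t(k_t)$, set $\mathbf{r}(t+1)=1$ with probability $\frac{1+\delta_t}{2}$ and $\mathbf{r}(t+1)=-1$ otherwise; choose $\alpha_t\in\mathbb{R}$ so that $\mathbf{x}_{t+1}=\mathbf{x}_t+\alpha_t\mathbf{u}_t$ satisfies $\mathbf{x}_{t+1}(k_t)=\mathbf{r}(t+1)$. Return $\mathbf{x}_T$. The sequence $\mathbf{r}\in\{\pm1\}^T$ is the random seed. *)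

theory Defs
  imports Complex_Main
begin

text \<open>Vectors in R^n are functions nat => real, indices 0..<n; a vector in R^S
  (S a subset of {0..<n}) is represented by its extension by zero.
  The matrix A in R^{m x n} is a function nat => nat => real (row, column).\<close>

definition crs_eta :: real where "crs_eta = 1/10"
definition crs_gamma :: real where "crs_gamma = 1/10000"
definition crs_delta :: real where "crs_delta = 1/20"

definition crs_T :: "nat \<Rightarrow> nat" where "crs_T n = nat \<lfloor>9 * real n / 10\<rfloor>"

definition sqnorm_on :: "nat set \<Rightarrow> (nat \<Rightarrow> real) \<Rightarrow> real" where
  "sqnorm_on S u = (\<Sum>j\<in>S. (u j)^2)"

definition leverage :: "nat set \<Rightarrow> (nat \<Rightarrow> real) set \<Rightarrow> nat \<Rightarrow> real" where
  "leverage S H i = Sup ({(u i)^2 / sqnorm_on S u | u. u \<in> H \<and> (\<exists>j\<in>S. u j \<noteq> 0)} \<union> {0})"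

definition find_vector :: "nat set \<Rightarrow> (nat \<Rightarrow> real) set \<Rightarrow> nat \<Rightarrow> (nat \<Rightarrow> real)" where
  "find_vector S H i = (THE u. u \<in> H \<and> u i = 1 \<and> sqnorm_on S u = 1 / leverage S H i)"

definition crs_D :: "nat \<Rightarrow> (nat \<Rightarrow> real) \<Rightarrow> nat set" where
  "crs_D n x = {i. i < n \<and> \<bar>x i\<bar> \<ge> 1 - crs_eta}"

definition crs_S :: "nat \<Rightarrow> (nat \<Rightarrow> real) \<Rightarrow> nat set" where
  "crs_S n x = {0..<n} - crs_D n x"

definition crs_H :: "(nat \<Rightarrow> nat \<Rightarrow> real) \<Rightarrow> nat \<Rightarrow> nat \<Rightarrow> (nat \<Rightarrow> real) \<Rightarrow> (nat \<Rightarrow> real) set" where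
  "crs_H A m n x = {u. (\<forall>j. j \<notin> crs_S n x \<longrightarrow> u j = 0)
      \<and> (\<Sum>j\<in>crs_S n x. u j * x j) = 0
      \<and> (\<forall>r<m. (\<Sum>j\<in>crs_S n x. A r j * u j) = 0)}"

definition crs_cand :: "(nat \<Rightarrow> nat \<Rightarrow> real) \<Rightarrow> nat \<Rightarrow> nat \<Rightarrow> (nat \<Rightarrow> real) \<Rightarrow> nat set" where
  "crs_cand A m n x = {k. k \<in> crs_S n x
      \<and> leverage (crs_S n x) (crs_H A m n x) k \<ge> 1 - crs_gamma
      \<and> \<bar>x k\<bar> \<le> crs_delta}"

text \<open>One iteration with random bit b = r(t+1); None stands for returning bottom.\<close>
definition crs_step :: "(nat \<Rightarrow> nat \<Rightarrow> real) \<Rightarrow> nat \<Rightarrow> nat \<Rightarrow> (nat \<Rightarrow> real) \<Rightarrow> real \<Rightarrow> (nat \<Rightarrow> real) option" where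
  "crs_step A m n x b =
     (if crs_cand A m n x = {} then None
      else let k = Min (crs_cand A m n x);
               u = find_vector (crs_S n x) (crs_H A m n x) k;
               \<alpha> = (b - x k) / u k
           in Some (\<lambda>i. x i + \<alpha> * u i))"

definition crs_run :: "(nat \<Rightarrow> nat \<Rightarrow> real) \<Rightarrow> nat \<Rightarrow> nat \<Rightarrow> real list \<Rightarrow> (nat \<Rightarrow> real) option" where
  "crs_run A m n rs = foldl (\<lambda>xo b. case xo of None \<Rightarrow> None | Some x \<Rightarrow> crs_step A m n x b)
                            (Some (\<lambda>_. 0)) rs"

text \<open>ColumnReductionSampling on seed r in {+-1}^T (rs ! t = r(t+1)).\<close>
definition ColumnReductionSampling :: "(nat \<Rightarrow> nat \<Rightarrow> real) \<Rightarrow> nat \<Rightarrow> nat \<Rightarrow> real list \<Rightarrow> (nat \<Rightarrow> real) option" where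
  "ColumnReductionSampling A m n rs = crs_run A m n rs"

definition crs_seeds :: "nat \<Rightarrow> real list set" where
  "crs_seeds n = {rs. length rs = crs_T n \<and> set rs \<subseteq> {-1, 1}}"

text \<open>Probability that bit b is drawn in the state xo: (1 + b * delta_t)/2, where
  delta_t = x_t(k_t); after the procedure has returned bottom the remaining bits
  are irrelevant and are taken to be uniform.\<close>
definition crs_bitprob :: "(nat \<Rightarrow> nat \<Rightarrow> real) \<Rightarrow> nat \<Rightarrow> nat \<Rightarrow> (nat \<Rightarrow> real) option \<Rightarrow> real \<Rightarrow> real" where
  "crs_bitprob A m n xo b = (case xo of None \<Rightarrow> 1/2
     | Some x \<Rightarrow> if crs_cand A m n x = {} then 1/2
                 else (1 + b * x (Min (crs_cand A m n x))) / 2)"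

definition crs_seed_prob :: "(nat \<Rightarrow> nat \<Rightarrow> real) \<Rightarrow> nat \<Rightarrow> nat \<Rightarrow> real list \<Rightarrow> real" where
  "crs_seed_prob A m n rs = (\<Prod>t<length rs. crs_bitprob A m n (crs_run A m n (take t rs)) (rs ! t))"

definition crs_good :: "(nat \<Rightarrow> nat \<Rightarrow> real) \<Rightarrow> nat \<Rightarrow> nat \<Rightarrow> real list \<Rightarrow> bool" where
  "crs_good A m n rs = (\<exists>x. ColumnReductionSampling A m n rs = Some x
      \<and> (\<forall>i<n. \<bar>x i\<bar> \<le> 1)
      \<and> card {i. i < n \<and> \<bar>x i\<bar> = 1} = crs_T n
      \<and> (\<forall>r<m. (\<Sum>j<n. A r j * x j) = 0))"

definition crs_success_prob :: "(nat \<Rightarrow> nat \<Rightarrow> real) \<Rightarrow> nat \<Rightarrow> nat \<Rightarrow> real" where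
  "crs_success_prob A m n = (\<Sum>rs\<in>crs_seeds n. if crs_good A m n rs then crs_seed_prob A m n rs else 0)"

end

theory Submission imports Defs "HOL-Analysis.Convex" begin


definition ip :: "nat set \<Rightarrow> (nat \<Rightarrow> real) \<Rightarrow> (nat \<Rightarrow> real) \<Rightarrow> real" where
  "ip S u v = (\<Sum>j\<in>S. u j * v j)"

lemma sqnorm_ip: "sqnorm_on S u = ip S u u"
  by (simp add: sqnorm_on_def ip_def power2_eq_square)

lemma ip_comm: "ip S u v = ip S v u"
  by (simp add: ip_def mult.commute)

definition orthonormal :: "nat set \<Rightarrow> (nat \<Rightarrow> real) list \<Rightarrow> bool" where
  "orthonormal S ws = ((\<forall>i<length ws. \<forall>j<length ws. ip S (ws!i) (ws!j) = (if i = j then 1 else 0))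
      \<and> (\<forall>i<length ws. \<forall>j. j \<notin> S \<longrightarrow> (ws!i) j = 0))"

definition Hperp :: "nat set \<Rightarrow> (nat \<Rightarrow> real) list \<Rightarrow> (nat \<Rightarrow> real) set" where
  "Hperp S ws = {u. (\<forall>j. j \<notin> S \<longrightarrow> u j = 0) \<and> (\<forall>i<length ws. ip S u (ws!i) = 0)}"

definition levs :: "(nat \<Rightarrow> real) list \<Rightarrow> nat \<Rightarrow> real" where
  "levs ws k = (\<Sum>i<length ws. ((ws!i) k)^2)"

definition vres :: "(nat \<Rightarrow> real) list \<Rightarrow> nat \<Rightarrow> nat \<Rightarrow> real" where
  "vres ws k = (\<lambda>j. (if j = k then 1 else 0) - (\<Sum>i<length ws. (ws!i) k * (ws!i) j))"

lemma ip_vres: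
  assumes "finite S" "k \<in> S"
  shows "ip S u (vres ws k) = u k - (\<Sum>i<length ws. (ws!i) k * ip S u (ws!i))"
proof -
  have "ip S u (vres ws k) = (\<Sum>j\<in>S. u j * (if j = k then 1 else 0)) - (\<Sum>j\<in>S. \<Sum>i<length ws. u j * ((ws!i) k * (ws!i) j))"
    by (simp add: ip_def vres_def right_diff_distrib sum_subtractf sum_distrib_left)
  also have "(\<Sum>j\<in>S. u j * (if j = k then 1 else 0)) = u k"
    using assms by (simp add: if_distrib sum.delta cong: if_cong)
  also have "(\<Sum>j\<in>S. \<Sum>i<length ws. u j * ((ws!i) k * (ws!i) j)) = (\<Sum>i<length ws. (ws!i) k * ip S u (ws!i))"
    by (subst sum.swap) (simp add: ip_def sum_distrib_left mult_ac)
  finally show ?thesis .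
qed

lemma vres_in:
  assumes "finite S" "k \<in> S" "orthonormal S ws"
  shows "vres ws k \<in> Hperp S ws"
proof -
  have "ip S (vres ws k) (ws!l) = 0" if "l < length ws" for l
  proof -
    have "ip S (vres ws k) (ws!l) = ip S (ws!l) (vres ws k)" by (rule ip_comm)
    also have "\<dots> = (ws!l) k - (\<Sum>i<length ws. (ws!i) k * ip S (ws!l) (ws!i))"
      using assms by (simp add: ip_vres)
    also have "(\<Sum>i<length ws. (ws!i) k * ip S (ws!l) (ws!i)) = (\<Sum>i<length ws. if i = l then (ws!l) k else 0)"
      using assms(3) that by (intro sum.cong) (auto simp: orthonormal_def)
    also have "\<dots> = (ws!l) k" using that by simp
    finally show ?thesis by simp
  qed
  moreover have "vres ws k j = 0" if "j \<notin> S" for j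
    using assms that by (auto simp: vres_def orthonormal_def)
  ultimately show ?thesis by (auto simp: Hperp_def)
qed

lemma ip_vres_H:
  assumes "finite S" "k \<in> S" "u \<in> Hperp S ws"
  shows "ip S u (vres ws k) = u k"
  using assms by (simp add: ip_vres Hperp_def)

lemma vres_k: "vres ws k k = 1 - levs ws k"
  by (simp add: vres_def levs_def power2_eq_square)

lemma vres_norm:
  assumes "finite S" "k \<in> S" "orthonormal S ws"
  shows "ip S (vres ws k) (vres ws k) = 1 - levs ws k"
  using ip_vres_H[OF assms(1,2) vres_in[OF assms]] vres_k by simp

lemma levs_le1:
  assumes "finite S" "k \<in> S" "orthonormal S ws"
  shows "levs ws k \<le> 1"
proof -
  have "0 \<le> ip S (vres ws k) (vres ws k)" unfolding ip_def by (intro sum_nonneg) auto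
  then show ?thesis using vres_norm[OF assms] by simp
qed

lemma levs_nonneg: "0 \<le> levs ws k"
  unfolding levs_def by (intro sum_nonneg) auto

lemma CS_H:
  assumes "finite S" "k \<in> S" "orthonormal S ws" "u \<in> Hperp S ws"
  shows "(u k)^2 \<le> ip S u u * (1 - levs ws k)"
proof -
  have "(u k)^2 = (ip S u (vres ws k))^2" using ip_vres_H[OF assms(1,2,4)] by simp
  also have "\<dots> \<le> ip S u u * ip S (vres ws k) (vres ws k)"
    unfolding ip_def using Cauchy_Schwarz_ineq_sum[of u "vres ws k" S]
    by (simp add: power2_eq_square)
  finally show ?thesis using vres_norm[OF assms(1-3)] by simp
qed

lemma leverage_eq:
  assumes "finite S" "k \<in> S" "orthonormal S ws"
  shows "leverage S (Hperp S ws) k = 1 - levs ws k"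
proof -
  let ?X = "{(u k)^2 / sqnorm_on S u | u. u \<in> Hperp S ws \<and> (\<exists>j\<in>S. u j \<noteq> 0)} \<union> {0}"
  have ub: "y \<le> 1 - levs ws k" if "y \<in> ?X" for y
  proof -
    have l1: "0 \<le> 1 - levs ws k" using levs_le1[OF assms] by simp
    from that consider "y = 0" | u where "y = (u k)^2 / sqnorm_on S u" "u \<in> Hperp S ws" "\<exists>j\<in>S. u j \<noteq> 0"
      by blast
    then show ?thesis
    proof cases
      case 1 then show ?thesis using l1 by simp
    next
      case 2
      have pos: "0 < ip S u u"
      proof -
        obtain j where j: "j \<in> S" "u j \<noteq> 0" using 2(3) by blast
        have "0 < u j * u j" using j(2) by (auto simp add: zero_less_mult_iff linorder_neq_iff)
        then show ?thesis using j(1) assms(1) unfolding ip_def by (intro sum_pos2[of S j]) auto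
      qed
      have "(u k)^2 \<le> ip S u u * (1 - levs ws k)" by (rule CS_H[OF assms 2(2)])
      then show ?thesis using pos 2(1) by (simp add: sqnorm_ip divide_le_eq mult.commute)
    qed
  qed
  have mem: "1 - levs ws k \<in> ?X"
  proof (cases "levs ws k = 1")
    case True then show ?thesis by simp
  next
    case False
    then have lt: "levs ws k < 1" using levs_le1[OF assms] by simp
    have "(vres ws k k)^2 / sqnorm_on S (vres ws k) = 1 - levs ws k"
      using vres_k[of ws k] vres_norm[OF assms] lt by (simp add: sqnorm_ip power2_eq_square)
    moreover have "\<exists>j\<in>S. vres ws k j \<noteq> 0" using assms(2) lt vres_k[of ws k] by (intro bexI[of _ k]) auto
    ultimately show ?thesis using vres_in[OF assms] by (intro UnI1 CollectI exI[of _ "vres ws k"]) auto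
  qed
  show ?thesis unfolding leverage_def by (rule cSup_eq_maximum[OF mem ub])
qed

lemma find_vector_spec:
  assumes "finite S" "k \<in> S" "orthonormal S ws" "levs ws k < 1"
  shows "find_vector S (Hperp S ws) k \<in> Hperp S ws
     \<and> find_vector S (Hperp S ws) k k = 1
     \<and> sqnorm_on S (find_vector S (Hperp S ws) k) = 1 / leverage S (Hperp S ws) k"
proof -
  define s where "s = levs ws k"
  have s1: "0 < 1 - s" using assms(4) s_def by simp
  define v where "v = (\<lambda>j. vres ws k j / (1 - s))"
  have vH: "v \<in> Hperp S ws"
    using vres_in[OF assms(1-3)] s1 by (auto simp: Hperp_def v_def ip_def sum_divide_distrib[symmetric])
  have vk: "v k = 1" using vres_k[of ws k] s1 by (simp add: v_def s_def)
  have vn: "ip S v v = 1 / (1 - s)"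
  proof -
    have "ip S v v = ip S (vres ws k) (vres ws k) / (1 - s)^2"
      by (simp add: ip_def v_def sum_divide_distrib power2_eq_square)
    then show ?thesis using vres_norm[OF assms(1-3)] s1 by (simp add: s_def power2_eq_square)
  qed
  have lev: "leverage S (Hperp S ws) k = 1 - s" using leverage_eq[OF assms(1-3)] s_def by simp
  have uniq: "u = v" if "u \<in> Hperp S ws" "u k = 1" "sqnorm_on S u = 1 / (1 - s)" for u
  proof -
    have uv: "ip S u (vres ws k) = 1" using ip_vres_H[OF assms(1,2) that(1)] that(2) by simp
    have "ip S u v = 1 / (1 - s)"
      using uv by (simp add: ip_def v_def sum_divide_distrib[symmetric])
    have "(\<Sum>j\<in>S. (u j - v j)^2) = (\<Sum>j\<in>S. u j * u j - 2 * (u j * v j) + v j * v j)"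
      by (intro sum.cong) (auto simp: power2_eq_square algebra_simps)
    also have "\<dots> = ip S u u - 2 * ip S u v + ip S v v"
      by (simp add: ip_def sum.distrib sum_subtractf sum_distrib_left)
    also have "\<dots> = 0" using \<open>ip S u v = 1 / (1 - s)\<close> vn that(3) by (simp add: sqnorm_ip)
    finally have "\<forall>j\<in>S. (u j - v j)^2 = 0"
      using assms(1) by (subst sum_nonneg_eq_0_iff[symmetric]) auto
    then have "\<forall>j\<in>S. u j = v j" by simp
    moreover have "\<forall>j. j \<notin> S \<longrightarrow> u j = v j" using that(1) vH by (auto simp: Hperp_def)
    ultimately show ?thesis by (intro ext) metis
  qed
  have "find_vector S (Hperp S ws) k = v"
    unfolding find_vector_def lev
  proof (rule the_equality)
    show "v \<in> Hperp S ws \<and> v k = 1 \<and> sqnorm_on S v = 1 / (1 - s)" using vH vk vn by (simp add: sqnorm_ip)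
  qed (use uniq in blast)
  then show ?thesis using vH vk vn lev by (simp add: sqnorm_ip)
qed

lemma sum_levs:
  assumes "finite S" "orthonormal S ws"
  shows "(\<Sum>k\<in>S. levs ws k) = real (length ws)"
proof -
  have "(\<Sum>k\<in>S. levs ws k) = (\<Sum>i<length ws. ip S (ws!i) (ws!i))"
    unfolding levs_def ip_def by (subst sum.swap) (simp add: power2_eq_square)
  also have "\<dots> = (\<Sum>i<length ws. 1)" using assms(2) by (intro sum.cong) (auto simp: orthonormal_def)
  finally show ?thesis by simp
qed



lemma ip_scale_right: "ip S u (\<lambda>j. c * v j) = c * ip S u v"
  by (simp add: ip_def sum_distrib_left mult_ac)

lemma gram_schmidt:
  assumes "finite S"
  shows "\<exists>ws. orthonormal S ws \<and> length ws \<le> length (filter (\<lambda>v. \<exists>j\<in>S. v j \<noteq> 0) Ls)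
     \<and> (\<forall>u. (\<forall>j. j \<notin> S \<longrightarrow> u j = 0) \<longrightarrow>
            ((\<forall>v\<in>set Ls. ip S u v = 0) \<longleftrightarrow> (\<forall>i<length ws. ip S u (ws!i) = 0)))"
proof (induction Ls)
  case Nil
  show ?case by (intro exI[of _ "[]"]) (simp add: orthonormal_def)
next
  case (Cons a Ls)
  then obtain ws where on: "orthonormal S ws"
    and len: "length ws \<le> length (filter (\<lambda>v. \<exists>j\<in>S. v j \<noteq> 0) Ls)"
    and eqv: "\<forall>u. (\<forall>j. j \<notin> S \<longrightarrow> u j = 0) \<longrightarrow>
            ((\<forall>v\<in>set Ls. ip S u v = 0) \<longleftrightarrow> (\<forall>i<length ws. ip S u (ws!i) = 0))" by blast
  define r where "r = (\<lambda>j. if j \<in> S then a j - (\<Sum>i<length ws. ip S a (ws!i) * (ws!i) j) else 0)"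
  have key: "ip S u a = ip S u r + (\<Sum>i<length ws. ip S a (ws!i) * ip S u (ws!i))" for u
  proof -
    have "ip S u r = (\<Sum>j\<in>S. u j * a j - (\<Sum>i<length ws. ip S a (ws!i) * (u j * (ws!i) j)))"
      unfolding ip_def r_def by (intro sum.cong) (auto simp: right_diff_distrib sum_distrib_left mult_ac)
    also have "\<dots> = ip S u a - (\<Sum>i<length ws. ip S a (ws!i) * ip S u (ws!i))"
      unfolding sum_subtractf ip_def by (subst sum.swap) (simp add: sum_distrib_left)
    finally show ?thesis by simp
  qed
  have rperp: "ip S r (ws!l) = 0" if "l < length ws" for l
  proof -
    have "(\<Sum>i<length ws. ip S a (ws!i) * ip S (ws!l) (ws!i)) = (\<Sum>i<length ws. if i = l then ip S a (ws!l) else 0)"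
      using on that by (intro sum.cong) (auto simp: orthonormal_def)
    then have "(\<Sum>i<length ws. ip S a (ws!i) * ip S (ws!l) (ws!i)) = ip S a (ws!l)" using that by simp
    then show ?thesis using key[of "ws!l"] by (simp add: ip_comm)
  qed
  have rsupp: "r j = 0" if "j \<notin> S" for j using that by (simp add: r_def)
  have lenmono: "length (filter (\<lambda>v. \<exists>j\<in>S. v j \<noteq> 0) Ls) \<le> length (filter (\<lambda>v. \<exists>j\<in>S. v j \<noteq> 0) (a # Ls))"
    by simp
  show ?case
  proof (cases "\<forall>j\<in>S. r j = 0")
    case True
    then have r0: "ip S u r = 0" for u by (simp add: ip_def)
    show ?thesis
    proof (intro exI[of _ ws] conjI)
      show "orthonormal S ws" by (rule on)
      show "length ws \<le> length (filter (\<lambda>v. \<exists>j\<in>S. v j \<noteq> 0) (a # Ls))" using len lenmono by linarith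
      show "\<forall>u. (\<forall>j. j \<notin> S \<longrightarrow> u j = 0) \<longrightarrow>
            ((\<forall>v\<in>set (a # Ls). ip S u v = 0) \<longleftrightarrow> (\<forall>i<length ws. ip S u (ws!i) = 0))"
        using eqv key r0 by auto
    qed
  next
    case False
    then obtain j0 where j0: "j0 \<in> S" "r j0 \<noteq> 0" by blast
    have anz: "\<exists>j\<in>S. a j \<noteq> 0"
    proof (rule ccontr)
      assume "\<not> (\<exists>j\<in>S. a j \<noteq> 0)"
      then have "ip S a w = 0" for w by (simp add: ip_def)
      then have "r j0 = 0" using \<open>\<not> (\<exists>j\<in>S. a j \<noteq> 0)\<close> by (simp add: r_def)
      with j0 show False by simp
    qed
    define nr where "nr = ip S r r"
    have nrpos: "0 < nr" unfolding nr_def ip_def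
    proof -
      have "0 < r j0 * r j0" using j0(2) by (auto simp add: zero_less_mult_iff linorder_neq_iff)
      then show "0 < (\<Sum>j\<in>S. r j * r j)" using j0(1) assms by (intro sum_pos2[of S j0]) auto
    qed
    define z where "z = (\<lambda>j. (1 / sqrt nr) * r j)"
    define ws' where "ws' = ws @ [z]"
    have zz: "ip S z z = 1"
    proof -
      have "ip S z z = (\<Sum>j\<in>S. ((1 / sqrt nr) * (1 / sqrt nr)) * (r j * r j))"
        unfolding z_def ip_def by (intro sum.cong) (auto simp: mult_ac)
      also have "\<dots> = (1 / sqrt nr) * (1 / sqrt nr) * nr"
        by (simp add: nr_def ip_def sum_distrib_left)
      finally have "ip S z z = (1 / sqrt nr) * (1 / sqrt nr) * nr" .
      then show ?thesis using nrpos by (simp add: field_simps)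
    qed
    have zw: "ip S z (ws!l) = 0" if "l < length ws" for l
    proof -
      have "ip S z (ws!l) = (1 / sqrt nr) * ip S r (ws!l)"
        unfolding z_def ip_def sum_distrib_left by (intro sum.cong) auto
      then show ?thesis using rperp[OF that] by simp
    qed
    have on': "orthonormal S ws'"
    proof -
      have "ip S (ws'!i) (ws'!j) = (if i = j then 1 else 0)" if "i < length ws'" "j < length ws'" for i j
      proof -
        have A: "i < length ws \<or> i = length ws" "j < length ws \<or> j = length ws"
          using that by (auto simp: ws'_def)
        show ?thesis
          using A on zz zw[of i] zw[of j]
          by (auto simp: ws'_def nth_append orthonormal_def ip_comm)
      qed
      moreover have "(ws'!i) j = 0" if "i < length ws'" "j \<notin> S" for i j
      proof -
        have "i < length ws \<or> i = length ws" using that by (auto simp: ws'_def)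
        then show ?thesis using on that rsupp[of j] by (auto simp: ws'_def nth_append orthonormal_def z_def)
      qed
      ultimately show ?thesis by (simp add: orthonormal_def)
    qed
    show ?thesis
    proof (intro exI[of _ ws'] conjI)
      show "orthonormal S ws'" by (rule on')
      show "length ws' \<le> length (filter (\<lambda>v. \<exists>j\<in>S. v j \<noteq> 0) (a # Ls))"
        using len anz by (simp add: ws'_def)
      show "\<forall>u. (\<forall>j. j \<notin> S \<longrightarrow> u j = 0) \<longrightarrow>
            ((\<forall>v\<in>set (a # Ls). ip S u v = 0) \<longleftrightarrow> (\<forall>i<length ws'. ip S u (ws'!i) = 0))"
      proof (intro allI impI)
        fix u :: "nat \<Rightarrow> real" assume su: "\<forall>j. j \<notin> S \<longrightarrow> u j = 0"
        have uz: "ip S u z = (1 / sqrt nr) * ip S u r" 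
          unfolding z_def ip_def sum_distrib_left by (intro sum.cong) auto
        have iff2: "(\<forall>i<length ws'. ip S u (ws'!i) = 0) \<longleftrightarrow> (\<forall>i<length ws. ip S u (ws!i) = 0) \<and> ip S u z = 0"
        proof
          assume H: "\<forall>i<length ws'. ip S u (ws'!i) = 0"
          have "ip S u (ws!i) = 0" if "i < length ws" for i
            using H[rule_format, of i] that by (simp add: ws'_def nth_append)
          moreover have "ip S u z = 0" using H[rule_format, of "length ws"] by (simp add: ws'_def)
          ultimately show "(\<forall>i<length ws. ip S u (ws!i) = 0) \<and> ip S u z = 0" by blast
        next
          assume H: "(\<forall>i<length ws. ip S u (ws!i) = 0) \<and> ip S u z = 0"
          show "\<forall>i<length ws'. ip S u (ws'!i) = 0"
          proof (intro allI impI)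
            fix i assume "i < length ws'"
            then have "i < length ws \<or> i = length ws" by (auto simp: ws'_def)
            then show "ip S u (ws'!i) = 0" using H by (auto simp: ws'_def nth_append)
          qed
        qed
        have zeq: "ip S u z = 0 \<longleftrightarrow> ip S u r = 0" using uz nrpos by simp
        show "(\<forall>v\<in>set (a # Ls). ip S u v = 0) \<longleftrightarrow> (\<forall>i<length ws'. ip S u (ws'!i) = 0)"
          unfolding iff2 zeq using eqv su key[of u] by auto
      qed
    qed
  qed
qed



lemma crs_S_sub: "crs_S n x \<subseteq> {..<n}"
  by (auto simp: crs_S_def)

lemma finite_crs_S: "finite (crs_S n x)"
  using crs_S_sub finite_subset by blast

lemma crs_S_iff: "i \<in> crs_S n x \<longleftrightarrow> i < n \<and> \<bar>x i\<bar> < 9/10"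
  by (auto simp: crs_S_def crs_D_def crs_eta_def)

lemma crs_H_ws:
  "\<exists>ws. orthonormal (crs_S n x) ws \<and> crs_H A m n x = Hperp (crs_S n x) ws \<and> length ws \<le> m + 1
     \<and> (m = 0 \<and> (\<forall>j\<in>crs_S n x. x j = 0) \<longrightarrow> ws = [])"
proof -
  let ?S = "crs_S n x"
  let ?Ls = "x # map A [0..<m]"
  obtain ws where on: "orthonormal ?S ws"
    and len: "length ws \<le> length (filter (\<lambda>v. \<exists>j\<in>?S. v j \<noteq> 0) ?Ls)"
    and eqv: "\<forall>u. (\<forall>j. j \<notin> ?S \<longrightarrow> u j = 0) \<longrightarrow>
            ((\<forall>v\<in>set ?Ls. ip ?S u v = 0) \<longleftrightarrow> (\<forall>i<length ws. ip ?S u (ws!i) = 0))"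
    using gram_schmidt[OF finite_crs_S] by blast
  have len2: "length ws \<le> m + 1"
  proof -
    have "length (filter (\<lambda>v. \<exists>j\<in>?S. v j \<noteq> 0) ?Ls) \<le> length ?Ls" by (rule length_filter_le)
    then show ?thesis using len by simp
  qed
  have H: "crs_H A m n x = Hperp ?S ws"
  proof -
    have "u \<in> crs_H A m n x \<longleftrightarrow> u \<in> Hperp ?S ws" for u
    proof (cases "\<forall>j. j \<notin> ?S \<longrightarrow> u j = 0")
      case True
      have "(\<forall>v\<in>set ?Ls. ip ?S u v = 0) \<longleftrightarrow> ((\<Sum>j\<in>?S. u j * x j) = 0 \<and> (\<forall>r<m. (\<Sum>j\<in>?S. A r j * u j) = 0))"
        by (auto simp: ip_def mult.commute)
      then show ?thesis using eqv True by (simp add: crs_H_def Hperp_def)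
    next
      case False
      then show ?thesis by (auto simp: crs_H_def Hperp_def)
    qed
    then show ?thesis by blast
  qed
  have "ws = []" if "m = 0" "\<forall>j\<in>?S. x j = 0"
    using len that by simp
  then show ?thesis using on H len2 by blast
qed

lemma step_data:
  assumes "crs_cand A m n x \<noteq> {}"
  defines "k \<equiv> Min (crs_cand A m n x)"
  defines "\<tau> \<equiv> leverage (crs_S n x) (crs_H A m n x) k"
  defines "u \<equiv> find_vector (crs_S n x) (crs_H A m n x) k"
  shows "k \<in> crs_S n x" "\<bar>x k\<bar> \<le> 1/20" "1 - 1/10000 \<le> \<tau>" "\<tau> \<le> 1"
    "u \<in> crs_H A m n x" "u k = 1" "sqnorm_on (crs_S n x) u = 1 / \<tau>"
    "crs_step A m n x b = Some (\<lambda>i. x i + (b - x k) * u i)"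
proof -
  have fin: "finite (crs_cand A m n x)"
    using finite_crs_S by (rule finite_subset[rotated]) (auto simp: crs_cand_def)
  have kc: "k \<in> crs_cand A m n x" using Min_in[OF fin assms(1)] k_def by simp
  then show kS: "k \<in> crs_S n x" and "\<bar>x k\<bar> \<le> 1/20" and tg: "1 - 1/10000 \<le> \<tau>"
    by (auto simp: crs_cand_def crs_delta_def crs_gamma_def \<tau>_def)
  obtain ws where on: "orthonormal (crs_S n x) ws" and H: "crs_H A m n x = Hperp (crs_S n x) ws"
    using crs_H_ws by blast
  have lev: "\<tau> = 1 - levs ws k" using leverage_eq[OF finite_crs_S kS on] H \<tau>_def by simp
  then show "\<tau> \<le> 1" using levs_nonneg[of ws k] by simp
  have "levs ws k < 1" using lev tg by simp
  from find_vector_spec[OF finite_crs_S kS on this] H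
  show uH: "u \<in> crs_H A m n x" and uk: "u k = 1" and "sqnorm_on (crs_S n x) u = 1 / \<tau>"
    by (simp_all add: u_def \<tau>_def)
  show "crs_step A m n x b = Some (\<lambda>i. x i + (b - x k) * u i)"
    using assms(1) uk by (simp add: crs_step_def Let_def k_def[symmetric] u_def[symmetric])
qed

lemma step_some_cand: "crs_step A m n x b = Some x' \<Longrightarrow> crs_cand A m n x \<noteq> {}"
  by (auto simp: crs_step_def)

lemma u_outside: "u \<in> crs_H A m n x \<Longrightarrow> i \<notin> crs_S n x \<Longrightarrow> u i = 0"
  by (auto simp: crs_H_def)

lemma u_small:
  assumes "u \<in> crs_H A m n x" "k \<in> crs_S n x" "i \<in> crs_S n x" "i \<noteq> k" "u k = 1"
    "sqnorm_on (crs_S n x) u = 1 / \<tau>"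
  shows "(u i)^2 \<le> 1 / \<tau> - 1"
proof -
  have "(\<Sum>j\<in>{i,k}. (u j)^2) \<le> (\<Sum>j\<in>crs_S n x. (u j)^2)"
    using assms(2,3) finite_crs_S by (intro sum_mono2) auto
  then show ?thesis using assms(4,5,6) by (simp add: sqnorm_on_def)
qed

definition Inv :: "(nat \<Rightarrow> nat \<Rightarrow> real) \<Rightarrow> nat \<Rightarrow> nat \<Rightarrow> nat \<Rightarrow> (nat \<Rightarrow> real) \<Rightarrow> bool" where
  "Inv A m n t x = ((\<forall>i. n \<le> i \<longrightarrow> x i = 0) \<and> (\<forall>i<n. \<bar>x i\<bar> \<le> 1)
     \<and> card {i. i < n \<and> \<bar>x i\<bar> = 1} = t \<and> (\<forall>r<m. (\<Sum>j<n. A r j * x j) = 0)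
     \<and> (m = 0 \<longrightarrow> (\<forall>i<n. \<bar>x i\<bar> = 1 \<or> x i = 0)))"

lemma Inv0: "Inv A m n 0 (\<lambda>_. 0)"
  by (simp add: Inv_def)

lemma m0_lev1:
  assumes "m = 0" "\<forall>j\<in>crs_S n x. x j = 0" "k \<in> crs_S n x"
  shows "leverage (crs_S n x) (crs_H A m n x) k = 1"
proof -
  obtain ws where on: "orthonormal (crs_S n x) ws" and H: "crs_H A m n x = Hperp (crs_S n x) ws"
    and e: "ws = []"
    using crs_H_ws[of n x A m] assms by blast
  show ?thesis using leverage_eq[OF finite_crs_S assms(3) on] H e by (simp add: levs_def)
qed

lemma sum_S_n:
  assumes "\<forall>i. i \<notin> crs_S n x \<longrightarrow> f i = 0"
  shows "(\<Sum>j<n. f j) = (\<Sum>j\<in>crs_S n x. f j)"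
  using assms crs_S_sub by (intro sum.mono_neutral_right) auto

lemma step_Inv:
  assumes I: "Inv A m n t x" and st: "crs_step A m n x b = Some x'" and b: "b = -1 \<or> b = 1"
  shows "Inv A m n (Suc t) x'"
    and "(\<Sum>i<n. (x' i)^2) = (\<Sum>i<n. (x i)^2)
          + (b - x (Min (crs_cand A m n x)))^2 / leverage (crs_S n x) (crs_H A m n x) (Min (crs_cand A m n x))"
proof -
  have c: "crs_cand A m n x \<noteq> {}" by (rule step_some_cand[OF st])
  define k where "k = Min (crs_cand A m n x)"
  define \<tau> where "\<tau> = leverage (crs_S n x) (crs_H A m n x) k"
  define u where "u = find_vector (crs_S n x) (crs_H A m n x) k"
  note D = step_data[OF c, folded k_def, folded \<tau>_def u_def]
  have x': "x' = (\<lambda>i. x i + (b - x k) * u i)" using D(8)[of b] st by simp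
  define \<alpha> where "\<alpha> = b - x k"
  have al: "\<bar>\<alpha>\<bar> \<le> 21/20" using b D(2) by (auto simp: \<alpha>_def)
  have tpos: "0 < \<tau>" using D(3) by simp
  have usm: "\<bar>u i\<bar> \<le> 1/99" if "i \<in> crs_S n x" "i \<noteq> k" for i
  proof -
    have "(u i)^2 \<le> 1/\<tau> - 1" by (rule u_small[OF D(5) D(1) that D(6) D(7)])
    also have "\<dots> \<le> 1 / (1 - 1/10000) - 1" using D(3) tpos by (simp add: divide_simps)
    also have "\<dots> \<le> (1/99)^2" by (simp add: power2_eq_square)
    finally show ?thesis using abs_le_square_iff[of "u i" "1/99"] by simp
  qed
  have uout: "u i = 0" if "i \<notin> crs_S n x" for i using u_outside[OF D(5) that] .
  have xS: "\<bar>x i\<bar> < 9/10" if "i \<in> crs_S n x" for i using that by (simp add: crs_S_iff)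
  have newS: "\<bar>x' i\<bar> < 1" if "i \<in> crs_S n x" "i \<noteq> k" for i
  proof -
    have "\<bar>\<alpha> * u i\<bar> \<le> 21/20 * (1/99)" unfolding abs_mult
      using al usm[OF that] by (intro mult_mono) auto
    then show ?thesis using xS[OF that(1)] by (simp add: x' \<alpha>_def[symmetric])
  qed
  have xk': "x' k = b" using D(6) by (simp add: x')
  have same: "x' i = x i" if "i \<notin> crs_S n x" for i using uout[OF that] by (simp add: x')
  have kn: "k < n" using D(1) crs_S_iff by blast
  have Ax: "(\<Sum>j<n. A r j * x' j) = 0" if "r < m" for r
  proof -
    have "(\<Sum>j<n. A r j * x' j) = (\<Sum>j<n. A r j * x j) + \<alpha> * (\<Sum>j<n. A r j * u j)"
      by (simp add: x' \<alpha>_def[symmetric] algebra_simps sum.distrib sum_distrib_left)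
    also have "(\<Sum>j<n. A r j * u j) = (\<Sum>j\<in>crs_S n x. A r j * u j)" using uout by (intro sum_S_n) auto
    also have "\<dots> = 0" using D(5) that by (simp add: crs_H_def)
    finally show ?thesis using I that by (simp add: Inv_def)
  qed
  have bnd: "\<forall>i<n. \<bar>x' i\<bar> \<le> 1"
  proof (intro allI impI)
    fix i assume "i < n"
    show "\<bar>x' i\<bar> \<le> 1"
    proof (cases "i = k")
      case True then show ?thesis using xk' b by auto
    next
      case False
      show ?thesis
      proof (cases "i \<in> crs_S n x")
        case True then show ?thesis using newS[OF True False] by simp
      next
        case F2: False then show ?thesis using same[OF F2] I \<open>i < n\<close> by (simp add: Inv_def)
      qed
    qed
  qed
  have setF: "{i. i < n \<and> \<bar>x' i\<bar> = 1} = insert k {i. i < n \<and> \<bar>x i\<bar> = 1}"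
  proof -
    have "(i < n \<and> \<bar>x' i\<bar> = 1) \<longleftrightarrow> (i = k \<or> (i < n \<and> \<bar>x i\<bar> = 1))" for i
    proof (cases "i = k")
      case True then show ?thesis using xk' b kn by auto
    next
      case False
      show ?thesis
      proof (cases "i \<in> crs_S n x")
        case True then show ?thesis using newS[OF True False] xS[OF True] False by auto
      next
        case F2: False then show ?thesis using same[OF F2] False by auto
      qed
    qed
    then show ?thesis by blast
  qed
  have knot: "k \<notin> {i. i < n \<and> \<bar>x i\<bar> = 1}" using D(2) by auto
  have card: "card {i. i < n \<and> \<bar>x' i\<bar> = 1} = Suc t"
    unfolding setF using I knot by (simp add: Inv_def)
  have out: "\<forall>i. n \<le> i \<longrightarrow> x' i = 0"
    using I same crs_S_iff by (auto simp: Inv_def)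
  have m0: "\<forall>i<n. \<bar>x' i\<bar> = 1 \<or> x' i = 0" if "m = 0"
  proof -
    have xz: "\<forall>j\<in>crs_S n x. x j = 0"
      using I that xS by (fastforce simp: Inv_def crs_S_iff)
    have t1: "\<tau> = 1" using m0_lev1[OF that xz D(1)] \<tau>_def by simp
    have "u i = 0" if "i \<in> crs_S n x" "i \<noteq> k" for i
      using u_small[OF D(5) D(1) that D(6) D(7)] t1 by simp
    then have "x' i = x i" if "i \<noteq> k" for i using that uout by (cases "i \<in> crs_S n x") (auto simp: x')
    then show ?thesis using I that xk' b unfolding Inv_def by (metis abs_minus_cancel abs_one)
  qed
  show "Inv A m n (Suc t) x'" using out bnd card Ax m0 by (simp add: Inv_def)
  have xu: "(\<Sum>i<n. x i * u i) = 0"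
  proof -
    have "(\<Sum>i<n. x i * u i) = (\<Sum>i\<in>crs_S n x. x i * u i)" using uout by (intro sum_S_n) auto
    then show ?thesis using D(5) by (simp add: crs_H_def mult.commute)
  qed
  have uu: "(\<Sum>i<n. (u i)^2) = 1/\<tau>"
  proof -
    have "(\<Sum>i<n. (u i)^2) = (\<Sum>i\<in>crs_S n x. (u i)^2)" using uout by (intro sum_S_n) auto
    then show ?thesis using D(7) by (simp add: sqnorm_on_def)
  qed
  have "(\<Sum>i<n. (x' i)^2) = (\<Sum>i<n. (x i)^2 + 2 * \<alpha> * (x i * u i) + \<alpha>^2 * (u i)^2)"
    by (simp add: x' \<alpha>_def[symmetric] power2_eq_square algebra_simps)
  also have "\<dots> = (\<Sum>i<n. (x i)^2) + 2 * \<alpha> * (\<Sum>i<n. x i * u i) + \<alpha>^2 * (\<Sum>i<n. (u i)^2)"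
    by (simp add: sum.distrib sum_distrib_left)
  finally show "(\<Sum>i<n. (x' i)^2) = (\<Sum>i<n. (x i)^2)
          + (b - x (Min (crs_cand A m n x)))^2 / leverage (crs_S n x) (crs_H A m n x) (Min (crs_cand A m n x))"
    using xu uu by (simp add: \<alpha>_def k_def[symmetric] \<tau>_def[symmetric])
qed



lemma exp_le_quad: fixes y :: real assumes "\<bar>y\<bar> \<le> 1" shows "exp y \<le> 1 + y + y^2"
proof (cases "0 \<le> y")
  case True then show ?thesis using exp_bound assms by auto
next
  case False
  have e: "1 - y \<le> exp (- y)" using exp_ge_add_one_self[of "-y"] by simp
  have p: "0 < 1 - y" using False by simp
  have "exp y = 1 / exp (-y)" by (simp add: exp_minus field_simps)
  also have "\<dots> \<le> 1 / (1 - y)" using e p by (intro divide_left_mono) auto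
  also have "\<dots> \<le> 1 + y + y^2"
  proof -
    have "1 \<le> (1 + y + y^2) * (1 - y)" using False by (simp add: algebra_simps power2_eq_square power3_eq_cube[symmetric]) (smt (verit) power3_eq_cube mult_nonneg_nonneg zero_le_square mult_le_0_iff)
    then show ?thesis using p by (simp add: divide_simps)
  qed
  finally show ?thesis .
qed

lemma sqb: fixes d e :: real assumes "\<bar>d\<bar> \<le> 1/20" "0 \<le> e" "e \<le> 1/9999" "s = 1 \<or> s = -1"
  shows "((1+s*d)^2 * (1+e) - 1)^2 \<le> 8405/1000 * d^2 + 244/100 * e^2"
proof -
  have eq: "(1+s*d)^2 * (1+e) - 1 = (2*s*d+d^2) + e * (1+s*d)^2" using assms(4) by (auto simp add: algebra_simps power2_eq_square)
  have A: "(2*s*d+d^2)^2 \<le> (41/20)^2 * d^2"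
  proof -
    have "\<bar>2*s*d+d^2\<bar> \<le> 41/20 * \<bar>d\<bar>"
    proof -
      have "\<bar>2*s*d+d^2\<bar> \<le> 2 * \<bar>d\<bar> + \<bar>d\<bar> * \<bar>d\<bar>" using assms(4) abs_triangle_ineq[of "2*s*d" "d^2"] by (auto simp: abs_mult power2_eq_square)
      also have "\<bar>d\<bar> * \<bar>d\<bar> \<le> 1/20 * \<bar>d\<bar>" using assms(1) by (intro mult_right_mono) auto
      finally show ?thesis by simp
    qed
    then have "\<bar>2*s*d+d^2\<bar>^2 \<le> (41/20 * \<bar>d\<bar>)^2" by (intro power_mono) auto
    moreover have "(41/20 * \<bar>d\<bar>)^2 = (41/20)^2 * d^2" by (simp only: power_mult_distrib power2_abs)
    ultimately show ?thesis unfolding power2_abs by linarith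
  qed
  have B: "(e * (1+s*d)^2)^2 \<le> 122/100 * e^2"
  proof -
    have "\<bar>1+s*d\<bar> \<le> 21/20" using assms(1,4) by auto
    then have "\<bar>1+s*d\<bar>^2 \<le> (21/20)^2" by (intro power_mono) auto
    then have "(1+s*d)^2 \<le> (21/20)^2" by (simp only: power2_abs)
    then have "((1+s*d)^2)^2 \<le> ((21/20)^2)^2" by (rule power_mono) auto
    moreover have "((21/20::real)^2)^2 \<le> 122/100" by (simp add: power2_eq_square)
    ultimately have "((1+s*d)^2)^2 \<le> 122/100" by linarith
    then have "e^2 * ((1+s*d)^2)^2 \<le> e^2 * (122/100)" by (rule mult_left_mono) simp
    then show ?thesis by (simp add: power_mult_distrib mult.commute)
  qed
  have "((2*s*d+d^2) + e * (1+s*d)^2)^2 \<le> 2 * (2*s*d+d^2)^2 + 2 * (e * (1+s*d)^2)^2"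
    by (smt (verit) sum_squares_bound power2_sum)
  moreover have "(41/20::real)^2 = 1681/400" by (simp add: power2_eq_square)
  ultimately show ?thesis using A B eq by (simp only:)
qed

lemma mgf: fixes d \<tau> :: real assumes "\<bar>d\<bar> \<le> 1/20" "1 - 1/10000 \<le> \<tau>" "\<tau> \<le> 1"
  shows "(1-d)/2 * exp (1/10 * ((1+d)^2 / \<tau> - 1 - 11/100000)) + (1+d)/2 * exp (1/10 * ((1-d)^2 / \<tau> - 1 - 11/100000)) \<le> 1"
proof -
  define e where "e = 1/\<tau> - 1"
  have tp: "0 < \<tau>" using assms by simp
  have e0: "0 \<le> e" using assms tp by (simp add: e_def)
  have e1: "e \<le> 1/9999" using assms tp by (simp add: e_def divide_simps)
  have w: "1/\<tau> = 1 + e" by (simp add: e_def)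
  define y1 where "y1 = 1/10 * ((1+d)^2 * (1+e) - 1)"
  define y2 where "y2 = 1/10 * ((1-d)^2 * (1+e) - 1)"
  have s1: "((1+1*d)^2 * (1+e) - 1)^2 \<le> 8405/1000 * d^2 + 244/100 * e^2" by (rule sqb[OF assms(1) e0 e1]) simp
  have s2: "((1+(-1)*d)^2 * (1+e) - 1)^2 \<le> 8405/1000 * d^2 + 244/100 * e^2" by (rule sqb[OF assms(1) e0 e1]) simp
  have y1s: "y1^2 \<le> (8405/1000 * d^2 + 244/100 * e^2) / 100"
  proof -
    have "y1^2 = ((1+1*d)^2 * (1+e) - 1)^2 / 100" by (simp add: y1_def power2_eq_square)
    then show ?thesis using s1 by (simp add: divide_right_mono)
  qed
  have y2s: "y2^2 \<le> (8405/1000 * d^2 + 244/100 * e^2) / 100"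
  proof -
    have "y2^2 = ((1+(-1)*d)^2 * (1+e) - 1)^2 / 100" by (simp add: y2_def power2_eq_square)
    then show ?thesis using s2 by (simp add: divide_right_mono)
  qed
  have sm: "8405/1000 * d^2 + 244/100 * e^2 \<le> 1" 
  proof -
    have "\<bar>d\<bar>^2 \<le> (1/20)^2" using assms(1) by (rule power_mono) auto
    then have "d^2 \<le> (1/20)^2" by (simp only: power2_abs)
    moreover have "e^2 \<le> (1/9999)^2" using e0 e1 by (intro power_mono) auto
    moreover have "(1/20::real)^2 = 1/400" "(1/9999::real)^2 \<le> 1/100" by (simp_all add: power2_eq_square)
    ultimately show ?thesis by linarith
  qed
  have ay1: "\<bar>y1\<bar> \<le> 1" using y1s sm abs_le_square_iff[of y1 1] by simp
  have ay2: "\<bar>y2\<bar> \<le> 1" using y2s sm abs_le_square_iff[of y2 1] by simp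
  have ex1: "exp y1 \<le> 1 + y1 + y1^2" by (rule exp_le_quad[OF ay1])
  have ex2: "exp y2 \<le> 1 + y2 + y2^2" by (rule exp_le_quad[OF ay2])
  have lin: "(1-d)/2 * y1 + (1+d)/2 * y2 = 1/10 * ((1 - d^2) * (1+e) - 1)"
    unfolding y1_def y2_def by (simp add: power2_eq_square field_simps)
  have pd1: "0 \<le> (1-d)/2" "0 \<le> (1+d)/2" using assms(1) by auto
  have F1: "(1-d)/2 * exp y1 + (1+d)/2 * exp y2 \<le> (1-d)/2 * (1 + y1 + y1^2) + (1+d)/2 * (1 + y2 + y2^2)"
    using ex1 ex2 pd1 by (intro add_mono mult_left_mono) auto
  have F2: "(1-d)/2 * (1 + y1 + y1^2) + (1+d)/2 * (1 + y2 + y2^2) = 1 + ((1-d)/2 * y1 + (1+d)/2 * y2) + ((1-d)/2 * y1^2 + (1+d)/2 * y2^2)"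
    by (simp add: field_simps)
  have F3: "(1-d)/2 * y1^2 + (1+d)/2 * y2^2 \<le> (1-d)/2 * ((8405/1000 * d^2 + 244/100 * e^2) / 100) + (1+d)/2 * ((8405/1000 * d^2 + 244/100 * e^2) / 100)"
    using y1s y2s pd1 by (intro add_mono mult_left_mono) auto
  have F4: "(1-d)/2 * ((8405/1000 * d^2 + 244/100 * e^2) / 100) + (1+d)/2 * ((8405/1000 * d^2 + 244/100 * e^2) / 100) = (8405/1000 * d^2 + 244/100 * e^2) / 100"
  proof -
    have gen: "(1-d)/2 * K + (1+d)/2 * K = K" for K :: real by (simp add: field_simps)
    show ?thesis by (rule gen)
  qed
  have A: "(1-d)/2 * exp y1 + (1+d)/2 * exp y2 \<le> 1 + 1/10 * ((1 - d^2) * (1+e) - 1) + (8405/1000 * d^2 + 244/100 * e^2) / 100"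
    using F1 F2 F3 F4 lin by linarith
  have d2: "0 \<le> d^2 * e" using e0 by simp
  have e2: "e^2 \<le> e * (1/9999)" using mult_left_mono[OF e1 e0] by (simp add: power2_eq_square)
  have B: "1 + 1/10 * ((1 - d^2) * (1+e) - 1) + (8405/1000 * d^2 + 244/100 * e^2) / 100 \<le> 1 + 1/10 * (11/100000)"
  proof -
    have q: "(1 - d^2) * (1+e) - 1 = e - d^2 - d^2 * e" by (simp add: algebra_simps)
    have "0 \<le> d^2" by simp
    define D where "D = d^2"
    define E2 where "E2 = e^2"
    define DE where "DE = d^2 * e"
    have "1 + 1/10 * (e - D - DE) + (8405/1000 * D + 244/100 * E2) / 100 \<le> 1 + 1/10 * (11/100000)"
    proof -
      have "0 \<le> DE" using d2 by (simp add: DE_def)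
      moreover have "0 \<le> D" by (simp add: D_def)
      moreover have "E2 \<le> e * (1/9999)" using e2 by (simp add: E2_def)
      ultimately have h: "0 \<le> DE" "0 \<le> D" "E2 \<le> e / 9999" by simp_all
      have h1: "8405/1000 * D / 100 \<le> D / 10" using h(2) by simp
      have h2: "e / 10 + 244/100 * E2 / 100 \<le> 11/1000000" using h(3) e1 e0 by linarith
      have h3: "1 + 1/10 * (e - D - DE) + (8405/1000 * D + 244/100 * E2) / 100
           = 1 + e/10 - D/10 - DE/10 + 8405/1000 * D / 100 + 244/100 * E2 / 100" by (simp add: field_simps)
      show ?thesis unfolding h3 using h1 h2 h(1) by linarith
    qed
    then show ?thesis unfolding q D_def E2_def DE_def .
  qed
  have C: "1 + 1/10 * (11/100000) \<le> exp (1/10 * (11/100000::real))" by (rule exp_ge_add_one_self)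
  have eqs: "exp (1/10 * ((1+d)^2 / \<tau> - 1 - 11/100000)) = exp y1 / exp (1/10 * (11/100000))"
            "exp (1/10 * ((1-d)^2 / \<tau> - 1 - 11/100000)) = exp y2 / exp (1/10 * (11/100000))"
  proof -
    have wi: "inverse \<tau> = 1 + e" using w by (simp add: divide_inverse)
    have q1: "1/10 * ((1+d)^2 / \<tau> - 1 - 11/100000) = y1 - 1/10 * (11/100000)"
      unfolding y1_def divide_inverse[of "(1+d)^2"] wi by (simp add: algebra_simps)
    have q2: "1/10 * ((1-d)^2 / \<tau> - 1 - 11/100000) = y2 - 1/10 * (11/100000)"
      unfolding y2_def divide_inverse[of "(1-d)^2"] wi by (simp add: algebra_simps)
    show "exp (1/10 * ((1+d)^2 / \<tau> - 1 - 11/100000)) = exp y1 / exp (1/10 * (11/100000))"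
            "exp (1/10 * ((1-d)^2 / \<tau> - 1 - 11/100000)) = exp y2 / exp (1/10 * (11/100000))"
      by (simp_all only: q1 q2 exp_diff)
  qed
  have "(1-d)/2 * exp y1 + (1+d)/2 * exp y2 \<le> exp (1/10 * (11/100000::real))" using A B C by linarith
  then show ?thesis unfolding eqs by (simp add: divide_simps)
qed

lemma cand_exists:
  assumes I: "Inv A m n t x" and on: "orthonormal (crs_S n x) ws"
    and H: "crs_H A m n x = Hperp (crs_S n x) ws"
    and big: "real (length ws) * 10000 < real n - real t - 400 * ((\<Sum>i<n. (x i)^2) - real t)"
  shows "crs_cand A m n x \<noteq> {}"
proof -
  define F where "F = {i. i < n \<and> \<bar>x i\<bar> = 1}"
  define Bg where "Bg = {i. i < n \<and> \<bar>x i\<bar> \<noteq> 1 \<and> 1/20 < \<bar>x i\<bar>}"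
  define N0 where "N0 = {i. i < n \<and> \<bar>x i\<bar> \<le> 1/20}"
  have cF: "card F = t" using I by (simp add: Inv_def F_def)
  have fins: "finite F" "finite Bg" "finite N0" by (auto simp: F_def Bg_def N0_def)
  have un: "{..<n} = F \<union> (Bg \<union> N0)" by (auto simp: F_def Bg_def N0_def)
  have dj: "F \<inter> (Bg \<union> N0) = {}" "Bg \<inter> N0 = {}" by (auto simp: F_def Bg_def N0_def)
  have sum_split: "(\<Sum>i<n. (x i)^2) = (\<Sum>i\<in>F. (x i)^2) + (\<Sum>i\<in>Bg. (x i)^2) + (\<Sum>i\<in>N0. (x i)^2)"
    unfolding un using fins dj by (simp add: sum.union_disjoint)
  have sF: "(\<Sum>i\<in>F. (x i)^2) = real t"
  proof -
    have "(\<Sum>i\<in>F. (x i)^2) = (\<Sum>i\<in>F. 1)"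
    proof (intro sum.cong refl)
      fix i assume "i \<in> F"
      then have "\<bar>x i\<bar>^2 = 1" by (simp add: F_def)
      then show "(x i)^2 = 1" by (simp only: power2_abs)
    qed
    then show ?thesis using cF by simp
  qed
  have sBg: "real (card Bg) / 400 \<le> (\<Sum>i\<in>Bg. (x i)^2)"
  proof -
    have "(\<Sum>i\<in>Bg. (1/400::real)) \<le> (\<Sum>i\<in>Bg. (x i)^2)"
    proof (intro sum_mono)
      fix i assume "i \<in> Bg"
      then have "1/20 < \<bar>x i\<bar>" by (simp add: Bg_def)
      then have "(1/20)^2 \<le> \<bar>x i\<bar>^2" by (intro power_mono) auto
      then show "1/400 \<le> (x i)^2" by (simp add: power2_eq_square)
    qed
    then show ?thesis by simp
  qed
  have sN0: "0 \<le> (\<Sum>i\<in>N0. (x i)^2)" by (intro sum_nonneg) auto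
  have cn: "card F + (card Bg + card N0) = n"
  proof -
    have "card {..<n} = card F + card (Bg \<union> N0)" unfolding un using fins dj by (simp add: card_Un_disjoint)
    also have "card (Bg \<union> N0) = card Bg + card N0" using fins dj by (simp add: card_Un_disjoint)
    finally show ?thesis by simp
  qed
  then have cn': "real (card N0) = real n - real t - real (card Bg)" using cF by (simp add: of_nat_add[symmetric] del: of_nat_add)
  have N0big: "real (length ws) * 10000 < real (card N0)"
  proof -
    define S0 where "S0 = (\<Sum>i<n. (x i)^2)"
    define S1 where "S1 = (\<Sum>i\<in>Bg. (x i)^2)"
    define S2 where "S2 = (\<Sum>i\<in>N0. (x i)^2)"
    have e1: "S0 = real t + S1 + S2" using sum_split sF by (simp add: S0_def S1_def S2_def)
    have e2: "real (card Bg) \<le> 400 * S1" using sBg by (simp add: S1_def)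
    have e3: "0 \<le> S2" using sN0 by (simp add: S2_def)
    have e4: "real (length ws) * 10000 < real n - real t - 400 * (S0 - real t)" using big by (simp add: S0_def)
    show ?thesis using e1 e2 e3 e4 cn' by argo
  qed
  define Bad where "Bad = {i \<in> N0. 1/10000 < levs ws i}"
  have N0S: "N0 \<subseteq> crs_S n x" by (auto simp: N0_def crs_S_iff)
  have cBad: "real (card Bad) / 10000 \<le> real (length ws)"
  proof -
    have "(\<Sum>i\<in>Bad. (1/10000::real)) \<le> (\<Sum>i\<in>Bad. levs ws i)"
      by (intro sum_mono) (auto simp: Bad_def)
    also have "\<dots> \<le> (\<Sum>i\<in>crs_S n x. levs ws i)"
      using N0S finite_crs_S levs_nonneg by (intro sum_mono2) (auto simp: Bad_def)
    also have "\<dots> = real (length ws)" by (rule sum_levs[OF finite_crs_S on])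
    finally show ?thesis by simp
  qed
  have "N0 - Bad \<noteq> {}"
  proof
    assume "N0 - Bad = {}"
    then have "N0 \<subseteq> Bad" by blast
    then have "card N0 \<le> card Bad" using fins by (intro card_mono) (auto simp: Bad_def)
    then show False using N0big cBad by linarith
  qed
  then obtain i where i: "i \<in> N0" "i \<notin> Bad" by blast
  have iS: "i \<in> crs_S n x" using i N0S by blast
  have "leverage (crs_S n x) (crs_H A m n x) i = 1 - levs ws i"
    using leverage_eq[OF finite_crs_S iS on] H by simp
  then have "i \<in> crs_cand A m n x" using i iS
    by (auto simp: crs_cand_def Bad_def N0_def crs_gamma_def crs_delta_def)
  then show ?thesis by blast
qed

definition pot :: "(nat \<Rightarrow> nat \<Rightarrow> real) \<Rightarrow> nat \<Rightarrow> nat \<Rightarrow> nat \<Rightarrow> (nat \<Rightarrow> real) option \<Rightarrow> real" where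
  "pot A m n t xo = (case xo of None \<Rightarrow> 1 | Some x \<Rightarrow> if m = 0 then 0 else
      exp (1/10 * ((\<Sum>i<n. (x i)^2) - real t - 11/100000 * real t - real n / 10000)))"

lemma pot_nonneg: "0 \<le> pot A m n t xo"
  by (auto simp: pot_def split: option.splits)

lemma crs_T_le: "real (crs_T n) \<le> 9 * real n / 10"
proof -
  have "0 \<le> \<lfloor>9 * real n / 10\<rfloor>" by simp
  then have "real (crs_T n) = real_of_int \<lfloor>9 * real n / 10\<rfloor>" by (simp add: crs_T_def)
  also have "\<dots> \<le> 9 * real n / 10" by (rule of_int_floor_le)
  finally show ?thesis .
qed

lemma m0_sum:
  assumes "Inv A 0 n t x"
  shows "(\<Sum>i<n. (x i)^2) = real t"
proof -
  have "(\<Sum>i<n. (x i)^2) = (\<Sum>i<n. if \<bar>x i\<bar> = 1 then 1 else 0)"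
  proof (intro sum.cong refl)
    fix i assume "i \<in> {..<n}"
    then have "\<bar>x i\<bar> = 1 \<or> x i = 0" using assms by (simp add: Inv_def)
    moreover have "\<bar>x i\<bar> = 1 \<Longrightarrow> (x i)^2 = 1" by (metis power2_abs one_power2)
    ultimately show "(x i)^2 = (if \<bar>x i\<bar> = 1 then 1 else 0)" by auto
  qed
  also have "\<dots> = real (card {i. i < n \<and> \<bar>x i\<bar> = 1})"
    by (simp add: sum.If_cases Int_def conj_commute)
  finally show ?thesis using assms by (simp add: Inv_def)
qed

lemma no_cand_pot:
  assumes I: "Inv A m n t x" and tT: "t < crs_T n" and nm: "10^7 * real m \<le> real n"
    and nc: "crs_cand A m n x = {}"
  shows "1 \<le> pot A m n t (Some x)"
proof -
  obtain ws where on: "orthonormal (crs_S n x) ws" and H: "crs_H A m n x = Hperp (crs_S n x) ws"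
    and len: "length ws \<le> m + 1" and e: "m = 0 \<and> (\<forall>j\<in>crs_S n x. x j = 0) \<longrightarrow> ws = []"
    using crs_H_ws by blast
  have tn: "real t + 1 \<le> 9 * real n / 10" using tT crs_T_le[of n] by linarith
  show ?thesis
  proof (cases "m = 0")
    case True
    have xz: "\<forall>j\<in>crs_S n x. x j = 0" using I True by (fastforce simp: Inv_def crs_S_iff)
    have "ws = []" using e True xz by simp
    moreover have "(\<Sum>i<n. (x i)^2) = real t" using m0_sum I True by simp
    ultimately have "crs_cand A m n x \<noteq> {}" using cand_exists[OF I on H] tn by simp
    with nc show ?thesis by simp
  next
    case False
    then have m1: "1 \<le> real m" by simp
    show ?thesis
    proof (rule ccontr)
      assume "\<not> 1 \<le> pot A m n t (Some x)"
      then have lt: "(\<Sum>i<n. (x i)^2) - real t < 11/100000 * real t + real n / 10000"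
        using False by (simp add: pot_def)
      have "real (length ws) \<le> real m + 1" using len by simp
      have "real (length ws) * 10000 < real n - real t - 400 * ((\<Sum>i<n. (x i)^2) - real t)"
      proof -
        have nm': "10000000 * real m \<le> real n" using nm by simp
        show ?thesis using \<open>real (length ws) \<le> real m + 1\<close> lt tn nm' m1 by argo
      qed
      then have "crs_cand A m n x \<noteq> {}" by (rule cand_exists[OF I on H])
      with nc show False by simp
    qed
  qed
qed

lemma bitprob_cand: "crs_cand A m n x \<noteq> {} \<Longrightarrow>
   crs_bitprob A m n (Some x) b = (1 + b * x (Min (crs_cand A m n x))) / 2"
  by (simp add: crs_bitprob_def)

lemma supermart:
  assumes I: "Inv A m n t x" and tT: "t < crs_T n" and nm: "10^7 * real m \<le> real n"
  shows "crs_bitprob A m n (Some x) (-1) * pot A m n (Suc t) (crs_step A m n x (-1))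
       + crs_bitprob A m n (Some x) 1 * pot A m n (Suc t) (crs_step A m n x 1) \<le> pot A m n t (Some x)"
proof (cases "crs_cand A m n x = {}")
  case True
  then show ?thesis using no_cand_pot[OF I tT nm True]
    by (simp add: crs_bitprob_def crs_step_def pot_def)
next
  case c: False
  define k where "k = Min (crs_cand A m n x)"
  define \<tau> where "\<tau> = leverage (crs_S n x) (crs_H A m n x) k"
  define u where "u = find_vector (crs_S n x) (crs_H A m n x) k"
  define d where "d = x k"
  note D = step_data[OF c, folded k_def, folded \<tau>_def u_def]
  define x1 where "x1 = (\<lambda>i. x i + (-1 - x k) * u i)"
  define x2 where "x2 = (\<lambda>i. x i + (1 - x k) * u i)"
  have st1: "crs_step A m n x (-1) = Some x1" using D(8)[of "-1"] by (simp add: x1_def)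
  have st2: "crs_step A m n x 1 = Some x2" using D(8)[of 1] by (simp add: x2_def)
  show ?thesis
  proof (cases "m = 0")
    case True then show ?thesis unfolding st1 st2 by (simp add: pot_def)
  next
    case False
    define P where "P = pot A m n t (Some x)"
    define Q where "Q = (\<Sum>i<n. (x i)^2) - real t - 11/100000 * real t - real n / 10000"
    have PQ: "P = exp (1/10 * Q)" using False by (simp add: P_def pot_def Q_def)
    have s1: "(\<Sum>i<n. (x1 i)^2) = (\<Sum>i<n. (x i)^2) + (1 + d)^2 / \<tau>"
    proof -
      have "(-1 - x k)^2 = (1 + x k)^2" by (simp add: power2_eq_square algebra_simps)
      then show ?thesis using step_Inv(2)[OF I st1] by (simp add: k_def[symmetric] \<tau>_def[symmetric] d_def)
    qed
    have s2: "(\<Sum>i<n. (x2 i)^2) = (\<Sum>i<n. (x i)^2) + (1 - d)^2 / \<tau>"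
      using step_Inv(2)[OF I st2] by (simp add: k_def[symmetric] \<tau>_def[symmetric] d_def)
    have p1: "pot A m n (Suc t) (Some x1) = P * exp (1/10 * ((1+d)^2/\<tau> - 1 - 11/100000))"
    proof -
      have "pot A m n (Suc t) (Some x1) = exp (1/10 * Q + 1/10 * ((1+d)^2/\<tau> - 1 - 11/100000))"
        using False s1 by (simp add: pot_def Q_def algebra_simps)
      then show ?thesis by (simp add: PQ exp_add)
    qed
    have p2: "pot A m n (Suc t) (Some x2) = P * exp (1/10 * ((1-d)^2/\<tau> - 1 - 11/100000))"
    proof -
      have "pot A m n (Suc t) (Some x2) = exp (1/10 * Q + 1/10 * ((1-d)^2/\<tau> - 1 - 11/100000))"
        using False s2 by (simp add: pot_def Q_def algebra_simps)
      then show ?thesis by (simp add: PQ exp_add)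
    qed
    have b1: "crs_bitprob A m n (Some x) (-1) = (1 - d)/2" using bitprob_cand[OF c] by (simp add: k_def[symmetric] d_def)
    have b2: "crs_bitprob A m n (Some x) 1 = (1 + d)/2" using bitprob_cand[OF c] by (simp add: k_def[symmetric] d_def)
    have M: "(1-d)/2 * exp (1/10 * ((1+d)^2 / \<tau> - 1 - 11/100000)) + (1+d)/2 * exp (1/10 * ((1-d)^2 / \<tau> - 1 - 11/100000)) \<le> 1"
      using mgf[of d \<tau>] D(2,3,4) by (simp add: d_def)
    have Pp: "0 \<le> P" by (simp add: P_def pot_nonneg)
    have "crs_bitprob A m n (Some x) (-1) * pot A m n (Suc t) (crs_step A m n x (-1))
       + crs_bitprob A m n (Some x) 1 * pot A m n (Suc t) (crs_step A m n x 1)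
       = P * ((1-d)/2 * exp (1/10 * ((1+d)^2 / \<tau> - 1 - 11/100000)) + (1+d)/2 * exp (1/10 * ((1-d)^2 / \<tau> - 1 - 11/100000)))"
      by (simp add: st1 st2 p1 p2 b1 b2 algebra_simps)
    also have "\<dots> \<le> P * 1" using M Pp by (intro mult_left_mono) auto
    finally show ?thesis by (simp add: P_def)
  qed
qed



definition step' :: "(nat \<Rightarrow> nat \<Rightarrow> real) \<Rightarrow> nat \<Rightarrow> nat \<Rightarrow> (nat \<Rightarrow> real) option \<Rightarrow> real \<Rightarrow> (nat \<Rightarrow> real) option" where
  "step' A m n xo b = (case xo of None \<Rightarrow> None | Some x \<Rightarrow> crs_step A m n x b)"

definition runf :: "(nat \<Rightarrow> nat \<Rightarrow> real) \<Rightarrow> nat \<Rightarrow> nat \<Rightarrow> (nat \<Rightarrow> real) option \<Rightarrow> real list \<Rightarrow> (nat \<Rightarrow> real) option" where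
  "runf A m n xo rs = foldl (\<lambda>xo b. case xo of None \<Rightarrow> None | Some x \<Rightarrow> crs_step A m n x b) xo rs"

definition probf :: "(nat \<Rightarrow> nat \<Rightarrow> real) \<Rightarrow> nat \<Rightarrow> nat \<Rightarrow> (nat \<Rightarrow> real) option \<Rightarrow> real list \<Rightarrow> real" where
  "probf A m n xo rs = (\<Prod>t<length rs. crs_bitprob A m n (runf A m n xo (take t rs)) (rs ! t))"

definition lists_pm :: "nat \<Rightarrow> real list set" where
  "lists_pm l = {rs. length rs = l \<and> set rs \<subseteq> {-1, 1}}"

lemma crs_run_runf: "crs_run A m n rs = runf A m n (Some (\<lambda>_. 0)) rs"
  by (simp add: crs_run_def runf_def)

lemma seed_prob_probf: "crs_seed_prob A m n rs = probf A m n (Some (\<lambda>_. 0)) rs"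
  by (simp add: crs_seed_prob_def probf_def crs_run_runf)

lemma runf_Nil[simp]: "runf A m n xo [] = xo"
  by (simp add: runf_def)

lemma runf_Cons: "runf A m n xo (b # rs) = runf A m n (step' A m n xo b) rs"
  by (simp add: runf_def step'_def)

lemma runf_None[simp]: "runf A m n None rs = None"
  by (induction rs) (simp_all add: runf_Cons step'_def)

lemma runf_append: "runf A m n xo (xs @ ys) = runf A m n (runf A m n xo xs) ys"
  by (simp add: runf_def)

lemma probf_Nil[simp]: "probf A m n xo [] = 1"
  by (simp add: probf_def)

lemma probf_Cons: "probf A m n xo (b # rs) = crs_bitprob A m n xo b * probf A m n (step' A m n xo b) rs"
  unfolding probf_def length_Cons prod.lessThan_Suc_shift by (simp add: runf_Cons)

lemma finite_lists_pm: "finite (lists_pm l)"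
proof -
  have "lists_pm l = {xs. set xs \<subseteq> {-1, 1} \<and> length xs = l}" by (auto simp: lists_pm_def)
  then show ?thesis using finite_lists_length_eq[of "{-1, 1::real}" l] by simp
qed

lemma lists_pm_0: "lists_pm 0 = {[]}"
  by (auto simp: lists_pm_def)

lemma lists_pm_Suc: "lists_pm (Suc l) = (\<lambda>rs. (-1) # rs) ` lists_pm l \<union> (\<lambda>rs. 1 # rs) ` lists_pm l"
proof (intro set_eqI iffI)
  fix xs assume "xs \<in> lists_pm (Suc l)"
  then obtain b rs where xs: "xs = b # rs" "length rs = l" "set rs \<subseteq> {-1,1}" "b = -1 \<or> b = 1"
    by (cases xs) (auto simp: lists_pm_def)
  then show "xs \<in> (\<lambda>rs. (-1) # rs) ` lists_pm l \<union> (\<lambda>rs. 1 # rs) ` lists_pm l"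
    by (auto simp: lists_pm_def)
qed (auto simp: lists_pm_def)

lemma sum_lists_pm_Suc:
  "(\<Sum>rs\<in>lists_pm (Suc l). g rs) = (\<Sum>rs\<in>lists_pm l. g ((-1) # rs)) + (\<Sum>rs\<in>lists_pm l. g (1 # rs))"
proof -
  have d: "(\<lambda>rs. (-1) # rs) ` lists_pm l \<inter> (\<lambda>rs. (1::real) # rs) ` lists_pm l = {}" by auto
  have "(\<Sum>rs\<in>lists_pm (Suc l). g rs) = (\<Sum>rs\<in>(\<lambda>rs. (-1) # rs) ` lists_pm l. g rs) + (\<Sum>rs\<in>(\<lambda>rs. 1 # rs) ` lists_pm l. g rs)"
    unfolding lists_pm_Suc using d finite_lists_pm by (intro sum.union_disjoint) auto
  also have "\<dots> = (\<Sum>rs\<in>lists_pm l. g ((-1) # rs)) + (\<Sum>rs\<in>lists_pm l. g (1 # rs))"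
    by (subst (1 2) sum.reindex) (auto simp: inj_on_def)
  finally show ?thesis .
qed

lemma bitprob_sum: "crs_bitprob A m n xo (-1) + crs_bitprob A m n xo 1 = 1"
  by (auto simp: crs_bitprob_def field_simps split: option.splits)

lemma bitprob_nonneg: "b = -1 \<or> b = 1 \<Longrightarrow> 0 \<le> crs_bitprob A m n xo b"
proof (cases xo)
  case (Some x)
  assume b: "b = -1 \<or> b = 1"
  show ?thesis
  proof (cases "crs_cand A m n x = {}")
    case False
    have "\<bar>x (Min (crs_cand A m n x))\<bar> \<le> 1/20" using step_data(2)[OF False] .
    then show ?thesis using Some False b by (auto simp: crs_bitprob_def)
  qed (simp add: crs_bitprob_def Some)
qed (simp add: crs_bitprob_def)

lemma probf_nonneg: "rs \<in> lists_pm l \<Longrightarrow> 0 \<le> probf A m n xo rs"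
  unfolding probf_def lists_pm_def
  by (intro prod_nonneg ballI bitprob_nonneg) (auto dest: nth_mem)

lemma prob_sum: "(\<Sum>rs\<in>lists_pm l. probf A m n xo rs) = 1"
proof (induction l arbitrary: xo)
  case 0 then show ?case by (simp add: lists_pm_0)
next
  case (Suc l)
  show ?case unfolding sum_lists_pm_Suc probf_Cons
    by (simp add: sum_distrib_left[symmetric] Suc bitprob_sum)
qed

lemma reach_Inv:
  assumes "Inv A m n t x" "set rs \<subseteq> {-1, 1}" "runf A m n (Some x) rs = Some x'"
  shows "Inv A m n (t + length rs) x'"
  using assms
proof (induction rs arbitrary: t x)
  case Nil then show ?case by simp
next
  case (Cons b rs)
  from Cons.prems(3) obtain y where y: "crs_step A m n x b = Some y"
    by (cases "crs_step A m n x b") (auto simp: runf_Cons step'_def)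
  have b: "b = -1 \<or> b = 1" using Cons.prems(2) by auto
  have "Inv A m n (Suc t) y" by (rule step_Inv(1)[OF Cons.prems(1) y b])
  moreover have "runf A m n (Some y) rs = Some x'" using Cons.prems(3) y by (simp add: runf_Cons step'_def)
  ultimately have "Inv A m n (Suc t + length rs) x'" using Cons.prems(2) by (intro Cons.IH) auto
  then show ?case by simp
qed

lemma main_pot:
  assumes nm: "10^7 * real m \<le> real n"
  shows "(\<forall>x. xo = Some x \<longrightarrow> Inv A m n t x) \<Longrightarrow> t + l = crs_T n \<Longrightarrow>
    (\<Sum>rs\<in>lists_pm l. probf A m n xo rs * pot A m n (t + l) (runf A m n xo rs)) \<le> pot A m n t xo"
proof (induction l arbitrary: xo t)
  case 0 then show ?case by (simp add: lists_pm_0)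
next
  case (Suc l)
  have tT: "t < crs_T n" using Suc.prems(2) by simp
  have IH: "(\<Sum>rs\<in>lists_pm l. probf A m n (step' A m n xo b) rs * pot A m n (Suc t + l) (runf A m n (step' A m n xo b) rs))
        \<le> pot A m n (Suc t) (step' A m n xo b)" if b: "b = -1 \<or> b = 1" for b
  proof (rule Suc.IH)
    show "\<forall>x. step' A m n xo b = Some x \<longrightarrow> Inv A m n (Suc t) x"
    proof (intro allI impI)
      fix x' assume h: "step' A m n xo b = Some x'"
      then obtain x where xo: "xo = Some x" and st: "crs_step A m n x b = Some x'"
        by (cases xo) (auto simp: step'_def)
      show "Inv A m n (Suc t) x'" using step_Inv(1)[OF _ st b] Suc.prems(1) xo by blast
    qed
    show "Suc t + l = crs_T n" using Suc.prems(2) by simp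
  qed
  have "(\<Sum>rs\<in>lists_pm (Suc l). probf A m n xo rs * pot A m n (t + Suc l) (runf A m n xo rs))
     = crs_bitprob A m n xo (-1) * (\<Sum>rs\<in>lists_pm l. probf A m n (step' A m n xo (-1)) rs * pot A m n (Suc t + l) (runf A m n (step' A m n xo (-1)) rs))
     + crs_bitprob A m n xo 1 * (\<Sum>rs\<in>lists_pm l. probf A m n (step' A m n xo 1) rs * pot A m n (Suc t + l) (runf A m n (step' A m n xo 1) rs))"
    unfolding sum_lists_pm_Suc probf_Cons runf_Cons by (simp add: sum_distrib_left mult_ac)
  also have "\<dots> \<le> crs_bitprob A m n xo (-1) * pot A m n (Suc t) (step' A m n xo (-1))
              + crs_bitprob A m n xo 1 * pot A m n (Suc t) (step' A m n xo 1)"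
    using IH[of "-1"] IH[of 1] bitprob_nonneg[of "-1"] bitprob_nonneg[of 1]
    by (intro add_mono mult_left_mono) auto
  also have "\<dots> \<le> pot A m n t xo"
  proof (cases xo)
    case None
    then show ?thesis by (simp add: step'_def pot_def crs_bitprob_def)
  next
    case (Some x)
    have "Inv A m n t x" using Suc.prems(1) Some by blast
    from supermart[OF this tT nm] show ?thesis by (simp add: Some step'_def)
  qed
  finally show ?case .
qed

lemma exp_small: "exp (- 100 :: real) \<le> 1/100"
proof -
  have "1 + 100 \<le> exp (100::real)" by (rule exp_ge_add_one_self)
  then show ?thesis by (simp add: exp_minus field_simps)
qed

lemma success_bound:
  assumes nm: "10^7 * real m \<le> real n"
  shows "crs_success_prob A m n \<ge> 0.99"
proof -
  let ?T = "crs_T n"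
  let ?x0 = "Some (\<lambda>_. 0) :: (nat \<Rightarrow> real) option"
  have seeds: "crs_seeds n = lists_pm ?T" by (auto simp: crs_seeds_def lists_pm_def)
  have pt: "(\<Sum>rs\<in>lists_pm ?T. probf A m n ?x0 rs * pot A m n ?T (runf A m n ?x0 rs)) \<le> pot A m n 0 ?x0"
    using main_pot[OF nm, where xo = ?x0 and t = 0 and l = ?T and A = A] Inv0 by simp
  have p0: "pot A m n 0 ?x0 \<le> 1/100"
  proof (cases "m = 0")
    case True then show ?thesis by (simp add: pot_def)
  next
    case False
    then have "10^7 \<le> real n" using nm by (simp add: mult_le_cancel_right1)
    then have "1/10 * (0 - 0 - 0 - real n / 10000) \<le> -100" by simp
    then have "pot A m n 0 ?x0 \<le> exp (-100)" using False by (simp add: pot_def)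
    then show ?thesis using exp_small by linarith
  qed
  have trm: "probf A m n ?x0 rs * (1 - pot A m n ?T (runf A m n ?x0 rs))
      \<le> (if crs_good A m n rs then crs_seed_prob A m n rs else 0)" if rs: "rs \<in> lists_pm ?T" for rs
  proof (cases "runf A m n ?x0 rs")
    case None
    then show ?thesis using probf_nonneg[OF rs] by (simp add: pot_def seed_prob_probf)
  next
    case (Some x)
    have I: "Inv A m n ?T x" using reach_Inv[OF Inv0, of rs] rs Some by (simp add: lists_pm_def)
    have "crs_good A m n rs"
      using I Some by (simp add: crs_good_def ColumnReductionSampling_def crs_run_runf Inv_def)
    then show ?thesis using probf_nonneg[OF rs] pot_nonneg
      by (simp add: seed_prob_probf mult_left_le)
  qed
  have "1 - 1/100 \<le> (\<Sum>rs\<in>lists_pm ?T. probf A m n ?x0 rs) - (\<Sum>rs\<in>lists_pm ?T. probf A m n ?x0 rs * pot A m n ?T (runf A m n ?x0 rs))"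
    using prob_sum[where l = ?T and A = A and m = m and n = n and xo = ?x0] pt p0 by linarith
  also have "\<dots> = (\<Sum>rs\<in>lists_pm ?T. probf A m n ?x0 rs * (1 - pot A m n ?T (runf A m n ?x0 rs)))"
    by (simp add: sum_subtractf right_diff_distrib)
  also have "\<dots> \<le> (\<Sum>rs\<in>lists_pm ?T. if crs_good A m n rs then crs_seed_prob A m n rs else 0)"
    using trm by (intro sum_mono) auto
  finally show ?thesis by (simp add: crs_success_prob_def seeds)
qed

lemma persist:
  assumes "\<bar>z k\<bar> = 1" "k < n" "runf A m n (Some z) rs = Some x"
  shows "x k = z k"
  using assms
proof (induction rs arbitrary: z)
  case Nil then show ?case by simp
next
  case (Cons b rs)
  from Cons.prems(3) obtain y where y: "crs_step A m n z b = Some y"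
    by (cases "crs_step A m n z b") (auto simp: runf_Cons step'_def)
  have c: "crs_cand A m n z \<noteq> {}" by (rule step_some_cand[OF y])
  have kS: "k \<notin> crs_S n z" using Cons.prems(1) by (simp add: crs_S_iff)
  have "y k = z k"
    using step_data(8)[OF c, of b] y u_outside[OF step_data(5)[OF c] kS] by auto
  moreover have "runf A m n (Some y) rs = Some x" using Cons.prems(3) y by (simp add: runf_Cons step'_def)
  ultimately show ?case using Cons.IH[of y] Cons.prems(1,2) by simp
qed

lemma distinct_outputs:
  assumes rs: "rs \<in> crs_seeds n" and rs': "rs' \<in> crs_seeds n" and ne: "rs \<noteq> rs'"
    and ox: "ColumnReductionSampling A m n rs = Some x" and ox': "ColumnReductionSampling A m n rs' = Some x'"
  shows "\<exists>i<n. x i \<noteq> x' i \<and> \<bar>x i\<bar> = 1 \<and> \<bar>x' i\<bar> = 1"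
proof -
  let ?x0 = "Some (\<lambda>_. 0) :: (nat \<Rightarrow> real) option"
  have len: "length rs = length rs'" using rs rs' by (simp add: crs_seeds_def)
  have "\<exists>j<length rs. rs ! j \<noteq> rs' ! j" using ne len nth_equalityI by blast
  define j where "j = (LEAST j. j < length rs \<and> rs ! j \<noteq> rs' ! j)"
  have j: "j < length rs" "rs ! j \<noteq> rs' ! j"
    using LeastI_ex[OF \<open>\<exists>j<length rs. rs ! j \<noteq> rs' ! j\<close>] by (simp_all add: j_def)
  have before: "rs ! i = rs' ! i" if "i < j" for i
    using not_less_Least[of i "\<lambda>j. j < length rs \<and> rs ! j \<noteq> rs' ! j"] that j(1) j_def by auto
  have tk: "take j rs = take j rs'"
    using before j(1) len by (intro nth_equalityI) auto
  have dec: "rs = take j rs @ rs ! j # drop (Suc j) rs" using id_take_nth_drop[OF j(1)] .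
  have dec': "rs' = take j rs' @ rs' ! j # drop (Suc j) rs'" using id_take_nth_drop[of j rs'] j(1) len by simp
  have r1: "runf A m n ?x0 rs = Some x" using ox by (simp add: ColumnReductionSampling_def crs_run_runf)
  have r2: "runf A m n ?x0 rs' = Some x'" using ox' by (simp add: ColumnReductionSampling_def crs_run_runf)
  obtain y where y: "runf A m n ?x0 (take j rs) = Some y"
    using r1 dec by (cases "runf A m n ?x0 (take j rs)") (metis runf_None runf_append option.distinct(1), simp)
  have y': "runf A m n ?x0 (take j rs') = Some y" using y tk by simp
  have r1': "runf A m n (step' A m n (Some y) (rs ! j)) (drop (Suc j) rs) = Some x"
    using r1 dec y by (metis runf_append runf_Cons)
  have r2': "runf A m n (step' A m n (Some y) (rs' ! j)) (drop (Suc j) rs') = Some x'"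
    using r2 dec' y' by (metis runf_append runf_Cons)
  obtain z where z: "crs_step A m n y (rs ! j) = Some z"
    using r1' by (cases "crs_step A m n y (rs ! j)") (auto simp: step'_def)
  obtain z' where z': "crs_step A m n y (rs' ! j) = Some z'"
    using r2' by (cases "crs_step A m n y (rs' ! j)") (auto simp: step'_def)
  have c: "crs_cand A m n y \<noteq> {}" by (rule step_some_cand[OF z])
  define k where "k = Min (crs_cand A m n y)"
  have kn: "k < n" using step_data(1)[OF c] crs_S_iff k_def by blast
  have uk: "find_vector (crs_S n y) (crs_H A m n y) k k = 1" using step_data(6)[OF c] k_def by simp
  have zk: "z k = rs ! j" using step_data(8)[OF c, of "rs ! j"] z uk k_def by auto
  have zk': "z' k = rs' ! j" using step_data(8)[OF c, of "rs' ! j"] z' uk k_def by auto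
  have pm: "rs ! j = -1 \<or> rs ! j = 1" "rs' ! j = -1 \<or> rs' ! j = 1"
  proof -
    have "rs ! j \<in> set rs" "rs' ! j \<in> set rs'" using j(1) len by simp_all
    then show "rs ! j = -1 \<or> rs ! j = 1" "rs' ! j = -1 \<or> rs' ! j = 1"
      using rs rs' by (auto simp: crs_seeds_def)
  qed
  have az: "\<bar>z k\<bar> = 1" "\<bar>z' k\<bar> = 1" using zk zk' pm by auto
  have xk: "x k = z k" using persist[where z = z and k = k, OF az(1) kn] r1' z by (simp add: step'_def)
  have xk': "x' k = z' k" using persist[where z = z' and k = k, OF az(2) kn] r2' z' by (simp add: step'_def)
  show ?thesis using kn xk xk' zk zk' j(2) az by (intro exI[of _ k]) auto
qed

theorem lemma5p3:
  shows "\<exists>C::real. C \<ge> 10^6 \<and>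
    (\<forall>(A :: nat \<Rightarrow> nat \<Rightarrow> real) (m::nat) (n::nat).
       (\<forall>i<m. \<forall>j<n. \<bar>A i j\<bar> \<le> 1) \<and> real n \<ge> C * real m \<longrightarrow>
         crs_success_prob A m n \<ge> 0.99 \<and>
         (\<forall>rs rs' x x'. rs \<in> crs_seeds n \<and> rs' \<in> crs_seeds n \<and> rs \<noteq> rs'
             \<and> ColumnReductionSampling A m n rs = Some x
             \<and> ColumnReductionSampling A m n rs' = Some x' \<longrightarrow>
            (\<exists>i<n. x i \<noteq> x' i \<and> \<bar>x i\<bar> = 1 \<and> \<bar>x' i\<bar> = 1)))"
proof -
  have "\<forall>(A :: nat \<Rightarrow> nat \<Rightarrow> real) (m::nat) (n::nat).
       (\<forall>i<m. \<forall>j<n. \<bar>A i j\<bar> \<le> 1) \<and> real n \<ge> 10^7 * real m \<longrightarrow>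
         crs_success_prob A m n \<ge> 0.99 \<and>
         (\<forall>rs rs' x x'. rs \<in> crs_seeds n \<and> rs' \<in> crs_seeds n \<and> rs \<noteq> rs'
             \<and> ColumnReductionSampling A m n rs = Some x
             \<and> ColumnReductionSampling A m n rs' = Some x' \<longrightarrow>
            (\<exists>i<n. x i \<noteq> x' i \<and> \<bar>x i\<bar> = 1 \<and> \<bar>x' i\<bar> = 1))"
  proof (intro allI impI conjI)
    fix A :: "nat \<Rightarrow> nat \<Rightarrow> real" and m n
    assume h: "(\<forall>i<m. \<forall>j<n. \<bar>A i j\<bar> \<le> 1) \<and> 10^7 * real m \<le> real n"
    then show "crs_success_prob A m n \<ge> 0.99" using success_bound by blast
    fix rs rs' x x'
    assume "rs \<in> crs_seeds n \<and> rs' \<in> crs_seeds n \<and> rs \<noteq> rs'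
             \<and> ColumnReductionSampling A m n rs = Some x
             \<and> ColumnReductionSampling A m n rs' = Some x'"
    then show "\<exists>i<n. x i \<noteq> x' i \<and> \<bar>x i\<bar> = 1 \<and> \<bar>x' i\<bar> = 1"
      using distinct_outputs by blast
  qed
  moreover have "(10::real)^6 \<le> 10^7" by simp
  ultimately show ?thesis by blast
qed

end
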